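(* Let $A$ be a metabelian Lie $U$-algebra over a field $k$, with $R=k[x_\alpha:\alpha\in\Lambda]$ as below, and let $M$ be a torsion-free $R$-module. Then every Lie algebra homomorphism $\varphi:A\oplus M\to A$ that is the identity on $A$ maps $M$ into $\mathrm{Fit}(A)$, its restriction $\varphi|_M$ is an $R$-module homomorphism $M\to\mathrm{Fit}(A)$, and $\varphi\mapsto\varphi|_M$ is a bijection between the set $\mathrm{Hom}_A(A\oplus M,A)$ of such homomorphisms and $\mathrm{Hom}_R(M,\mathrm{Fit}(A))$.
   Context: A Lie algebra is metabelian if $(a\circ b)\circ(c\circ d)=0$ identically; $\mathrm{Fit}(A)$ is the ideal generated by all elements lying in nilpotent ideals. A metabelian Lie algebra $A$ is a $U$-algebra if $\mathrm{Fit}(A)$ is abelian and torsion-free as a module over $R=k[x_\alpha:\alpha\in\Lambda]$, where $\{z_\alpha:\alpha\in\Lambda\}\subseteq A$ is a family whose images form a basis of $A/\mathrm{Fit}(A)$ and $b\cdot x_\alpha=b\circ z_\alpha$ for $b\in\mathrm{Fit}(A)$ (extended multiplicatively and linearly). Let $V$ be the $k$-span of $\{z_\alpha\}$. Direct module extension: $A\oplus M$ is the $k$-space $V\oplus\mathrm{Fit}(A)\oplus M$ with bracket: on $V\oplus\mathrm{Fit}(A)$ it is that of $A$; all products between elements of $\mathrm{Fit}(A)\oplus M$ and elements of $M$ (either order) are $0$; $m\circ z_\alpha=m\cdot x_\alpha=-z_\alpha\circ m$ for $m\in M$; extended bilinearly. It is a metabelian Lie algebra containing $A$. *)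

theory Defs
  imports Complex_Main "HOL-Library.Poly_Mapping" "HOL-Library.Product_Plus"
begin

definition lie_algebra ::
  "('k::field \<Rightarrow> 'a::ab_group_add \<Rightarrow> 'a) \<Rightarrow> ('a \<Rightarrow> 'a \<Rightarrow> 'a) \<Rightarrow> bool" where
  "lie_algebra sc br \<longleftrightarrow> module sc
     \<and> (\<forall>a b c. br (a + b) c = br a c + br b c)
     \<and> (\<forall>a b c. br a (b + c) = br a b + br a c)
     \<and> (\<forall>r a b. br (sc r a) b = sc r (br a b))
     \<and> (\<forall>r a b. br a (sc r b) = sc r (br a b))
     \<and> (\<forall>a. br a a = 0)
     \<and> (\<forall>a b c. br a (br b c) + br b (br c a) + br c (br a b) = 0)"

definition metabelian :: "('a::ab_group_add \<Rightarrow> 'a \<Rightarrow> 'a) \<Rightarrow> bool" where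
  "metabelian br \<longleftrightarrow> (\<forall>a b c d. br (br a b) (br c d) = 0)"

definition lie_ideal ::
  "('k::field \<Rightarrow> 'a::ab_group_add \<Rightarrow> 'a) \<Rightarrow> ('a \<Rightarrow> 'a \<Rightarrow> 'a) \<Rightarrow> 'a set \<Rightarrow> bool" where
  "lie_ideal sc br I \<longleftrightarrow> module.subspace sc I \<and> (\<forall>x\<in>I. \<forall>a. br x a \<in> I)"

fun lower_central ::
  "('k::field \<Rightarrow> 'a::ab_group_add \<Rightarrow> 'a) \<Rightarrow> ('a \<Rightarrow> 'a \<Rightarrow> 'a) \<Rightarrow> 'a set \<Rightarrow> nat \<Rightarrow> 'a set" where
  "lower_central sc br I 0 = I"
| "lower_central sc br I (Suc n) =
     module.span sc {br x y | x y. x \<in> lower_central sc br I n \<and> y \<in> I}"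

definition nilpotent_ideal ::
  "('k::field \<Rightarrow> 'a::ab_group_add \<Rightarrow> 'a) \<Rightarrow> ('a \<Rightarrow> 'a \<Rightarrow> 'a) \<Rightarrow> 'a set \<Rightarrow> bool" where
  "nilpotent_ideal sc br I \<longleftrightarrow> lie_ideal sc br I \<and> (\<exists>n. lower_central sc br I n \<subseteq> {0})"

definition Fit ::
  "('k::field \<Rightarrow> 'a::ab_group_add \<Rightarrow> 'a) \<Rightarrow> ('a \<Rightarrow> 'a \<Rightarrow> 'a) \<Rightarrow> 'a set" where
  "Fit sc br = \<Inter>{J. lie_ideal sc br J \<and>
      \<Union>{I. nilpotent_ideal sc br I} \<subseteq> J}"

definition quot_basis ::
  "('k::field \<Rightarrow> 'a::ab_group_add \<Rightarrow> 'a) \<Rightarrow> 'a set \<Rightarrow> ('l \<Rightarrow> 'a) \<Rightarrow> bool" where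
  "quot_basis sc F z \<longleftrightarrow>
     (\<forall>a. \<exists>c f. finite {\<alpha>. c \<alpha> \<noteq> 0} \<and> f \<in> F \<and>
               a = (\<Sum>\<alpha>\<in>{\<alpha>. c \<alpha> \<noteq> 0}. sc (c \<alpha>) (z \<alpha>)) + f)
   \<and> (\<forall>c. finite {\<alpha>. c \<alpha> \<noteq> 0} \<and> (\<Sum>\<alpha>\<in>{\<alpha>. c \<alpha> \<noteq> 0}. sc (c \<alpha>) (z \<alpha>)) \<in> F
          \<longrightarrow> (\<forall>\<alpha>. c \<alpha> = 0))"

type_synonym ('l, 'k) mpoly = "('l \<Rightarrow>\<^sub>0 nat) \<Rightarrow>\<^sub>0 'k"

definition const_poly :: "'k::zero \<Rightarrow> ('l, 'k) mpoly" where
  "const_poly c = Poly_Mapping.single 0 c"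

definition var_poly :: "'l \<Rightarrow> ('l, 'k::{zero,one}) mpoly" where
  "var_poly \<alpha> = Poly_Mapping.single (Poly_Mapping.single \<alpha> 1) 1"

text \<open>Defined pointwise as the common value of
  all orderings, which is well-defined wherever the operators commute (e.g. on Fit(A)).\<close>
definition mono_act :: "('l \<Rightarrow> 'b \<Rightarrow> 'b) \<Rightarrow> ('l \<Rightarrow>\<^sub>0 nat) \<Rightarrow> 'b \<Rightarrow> 'b" where
  "mono_act T \<mu> b = (THE y. \<forall>xs. (\<forall>\<alpha>. count_list xs \<alpha> = Poly_Mapping.lookup \<mu> \<alpha>)
                              \<longrightarrow> fold T xs b = y)"

definition poly_act ::
  "('k \<Rightarrow> 'b::comm_monoid_add \<Rightarrow> 'b) \<Rightarrow> ('l \<Rightarrow> 'b \<Rightarrow> 'b) \<Rightarrow> ('l, 'k::zero) mpoly \<Rightarrow> 'b \<Rightarrow> 'b" where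
  "poly_act sc T p b = (\<Sum>\<mu>\<in>Poly_Mapping.keys p. sc (Poly_Mapping.lookup p \<mu>) (mono_act T \<mu> b))"

definition fit_act ::
  "('k::field \<Rightarrow> 'a::ab_group_add \<Rightarrow> 'a) \<Rightarrow> ('a \<Rightarrow> 'a \<Rightarrow> 'a) \<Rightarrow> ('l \<Rightarrow> 'a)
    \<Rightarrow> ('l, 'k) mpoly \<Rightarrow> 'a \<Rightarrow> 'a" where
  "fit_act sc br z = poly_act sc (\<lambda>\<alpha> b. br b (z \<alpha>))"

definition U_algebra ::
  "('k::field \<Rightarrow> 'a::ab_group_add \<Rightarrow> 'a) \<Rightarrow> ('a \<Rightarrow> 'a \<Rightarrow> 'a) \<Rightarrow> ('l \<Rightarrow> 'a) \<Rightarrow> bool" where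
  "U_algebra sc br z \<longleftrightarrow> lie_algebra sc br \<and> metabelian br
     \<and> quot_basis sc (Fit sc br) z
     \<and> (\<forall>x\<in>Fit sc br. \<forall>y\<in>Fit sc br. br x y = 0)
     \<and> (\<forall>p b. b \<in> Fit sc br \<and> fit_act sc br z p b = 0 \<longrightarrow> p = 0 \<or> b = 0)"

definition torsion_free :: "(('l, 'k::field) mpoly \<Rightarrow> 'm::ab_group_add \<Rightarrow> 'm) \<Rightarrow> bool" where
  "torsion_free act \<longleftrightarrow> (\<forall>p m. act p m = 0 \<longrightarrow> p = 0 \<or> m = 0)"

definition zcoords ::
  "('k::field \<Rightarrow> 'a::ab_group_add \<Rightarrow> 'a) \<Rightarrow> ('a \<Rightarrow> 'a \<Rightarrow> 'a) \<Rightarrow> ('l \<Rightarrow> 'a) \<Rightarrow> 'a \<Rightarrow> 'l \<Rightarrow> 'k" where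
  "zcoords sc br z a = (THE c. finite {\<alpha>. c \<alpha> \<noteq> 0} \<and>
      a - (\<Sum>\<alpha>\<in>{\<alpha>. c \<alpha> \<noteq> 0}. sc (c \<alpha>) (z \<alpha>)) \<in> Fit sc br)"

text \<open>m \<circ> a for m in M, a in A: by bilinearity m \<circ> (sum c_alpha z_alpha + f)
  = m \<cdot> (sum c_alpha x_alpha).\<close>
definition mod_br ::
  "('k::field \<Rightarrow> 'a::ab_group_add \<Rightarrow> 'a) \<Rightarrow> ('a \<Rightarrow> 'a \<Rightarrow> 'a) \<Rightarrow> ('l \<Rightarrow> 'a)
    \<Rightarrow> (('l, 'k) mpoly \<Rightarrow> 'm \<Rightarrow> 'm) \<Rightarrow> 'm \<Rightarrow> 'a \<Rightarrow> 'm" where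
  "mod_br sc br z act m a =
     act (\<Sum>\<alpha>\<in>{\<alpha>. zcoords sc br z a \<alpha> \<noteq> 0}.
            Poly_Mapping.single (Poly_Mapping.single \<alpha> 1) (zcoords sc br z a \<alpha>)) m"

definition ext_br ::
  "('k::field \<Rightarrow> 'a::ab_group_add \<Rightarrow> 'a) \<Rightarrow> ('a \<Rightarrow> 'a \<Rightarrow> 'a) \<Rightarrow> ('l \<Rightarrow> 'a)
    \<Rightarrow> (('l, 'k) mpoly \<Rightarrow> 'm::ab_group_add \<Rightarrow> 'm) \<Rightarrow> 'a \<times> 'm \<Rightarrow> 'a \<times> 'm \<Rightarrow> 'a \<times> 'm" where
  "ext_br sc br z act x y =
     (br (fst x) (fst y),
      mod_br sc br z act (snd x) (fst y) - mod_br sc br z act (snd y) (fst x))"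

definition ext_sc ::
  "('k::field \<Rightarrow> 'a::ab_group_add \<Rightarrow> 'a) \<Rightarrow> (('l, 'k) mpoly \<Rightarrow> 'm::ab_group_add \<Rightarrow> 'm)
    \<Rightarrow> 'k \<Rightarrow> 'a \<times> 'm \<Rightarrow> 'a \<times> 'm" where
  "ext_sc sc act r x = (sc r (fst x), act (const_poly r) (snd x))"

definition Hom_A ::
  "('k::field \<Rightarrow> 'a::ab_group_add \<Rightarrow> 'a) \<Rightarrow> ('a \<Rightarrow> 'a \<Rightarrow> 'a) \<Rightarrow> ('l \<Rightarrow> 'a)
    \<Rightarrow> (('l, 'k) mpoly \<Rightarrow> 'm::ab_group_add \<Rightarrow> 'm) \<Rightarrow> ('a \<times> 'm \<Rightarrow> 'a) set" where
  "Hom_A sc br z act = {\<phi>.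
      (\<forall>x y. \<phi> (x + y) = \<phi> x + \<phi> y)
    \<and> (\<forall>r x. \<phi> (ext_sc sc act r x) = sc r (\<phi> x))
    \<and> (\<forall>x y. \<phi> (ext_br sc br z act x y) = br (\<phi> x) (\<phi> y))
    \<and> (\<forall>a. \<phi> (a, 0) = a)}"

definition Hom_R ::
  "('k::field \<Rightarrow> 'a::ab_group_add \<Rightarrow> 'a) \<Rightarrow> ('a \<Rightarrow> 'a \<Rightarrow> 'a) \<Rightarrow> ('l \<Rightarrow> 'a)
    \<Rightarrow> (('l, 'k) mpoly \<Rightarrow> 'm::ab_group_add \<Rightarrow> 'm) \<Rightarrow> ('m \<Rightarrow> 'a) set" where
  "Hom_R sc br z act = {\<psi>.
      (\<forall>m. \<psi> m \<in> Fit sc br)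
    \<and> (\<forall>m n. \<psi> (m + n) = \<psi> m + \<psi> n)
    \<and> (\<forall>p m. \<psi> (act p m) = fit_act sc br z p (\<psi> m))}"

end

theory Submission imports Defs begin

locale ualg = A: module sc + M: module act
  for sc :: "'k::field \<Rightarrow> 'a::ab_group_add \<Rightarrow> 'a"
  and act :: "('l, 'k) mpoly \<Rightarrow> 'm::ab_group_add \<Rightarrow> 'm" +
  fixes br :: "'a \<Rightarrow> 'a \<Rightarrow> 'a" and z :: "'l \<Rightarrow> 'a"
  assumes U: "U_algebra sc br z"
begin

lemma lie: "lie_algebra sc br" using U by (simp add: U_algebra_def)
lemma br_add1: "br (a + b) c = br a c + br b c" using lie by (simp add: lie_algebra_def)
lemma br_add2: "br a (b + c) = br a b + br a c" using lie by (simp add: lie_algebra_def)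
lemma br_sc1: "br (sc r a) b = sc r (br a b)" using lie by (simp add: lie_algebra_def)
lemma br_sc2: "br a (sc r b) = sc r (br a b)" using lie by (simp add: lie_algebra_def)
lemma br_self: "br a a = 0" using lie by (simp add: lie_algebra_def)
lemma metab: "br (br a b) (br c d) = 0" using U by (simp add: U_algebra_def metabelian_def)

lemma add1: "additive (\<lambda>a. br a c)" by standard (rule br_add1)
lemma add2: "additive (\<lambda>c. br a c)" by standard (rule br_add2)

lemma br_zero1[simp]: "br 0 b = 0" using additive.zero[OF add1] .
lemma br_zero2[simp]: "br a 0 = 0" using additive.zero[OF add2] .
lemma br_diff1: "br (a - b) c = br a c - br b c" using additive.diff[OF add1] .
lemma br_diff2: "br a (b - c) = br a b - br a c" using additive.diff[OF add2] .
lemma br_sum1: "br (sum f S) c = (\<Sum>x\<in>S. br (f x) c)" using additive.sum[OF add1] .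
lemma br_sum2: "br c (sum f S) = (\<Sum>x\<in>S. br c (f x))" using additive.sum[OF add2] .
lemma br_anti: "br a b = - br b a"
proof -
  have "br (a+b) (a+b) = br a (a+b) + br b (a+b)" by (rule br_add1)
  also have "\<dots> = br a b + br b a" by (simp add: br_add2 br_self)
  finally have "br a b + br b a = 0" by (simp add: br_self)
  then show ?thesis by (simp add: eq_neg_iff_add_eq_0)
qed

lemma Fit_ideal: "lie_ideal sc br (Fit sc br)"
proof -
  let ?F = "{J. lie_ideal sc br J \<and> \<Union>{I. nilpotent_ideal sc br I} \<subseteq> J}"
  have "A.subspace (\<Inter>?F)" by (rule A.subspace_Inter) (auto simp: lie_ideal_def)
  moreover have "\<forall>x\<in>\<Inter>?F. \<forall>a. br x a \<in> \<Inter>?F" by (auto simp: lie_ideal_def)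
  ultimately show ?thesis by (simp add: lie_ideal_def Fit_def)
qed

lemma Fit_sub: "A.subspace (Fit sc br)" using Fit_ideal by (simp add: lie_ideal_def)
lemma Fit_br: "x \<in> Fit sc br \<Longrightarrow> br x a \<in> Fit sc br" using Fit_ideal by (simp add: lie_ideal_def)
lemma nilp_Fit: "nilpotent_ideal sc br I \<Longrightarrow> I \<subseteq> Fit sc br"
  unfolding Fit_def by blast
lemma Fit_ab: "x \<in> Fit sc br \<Longrightarrow> y \<in> Fit sc br \<Longrightarrow> br x y = 0"
  using U by (simp add: U_algebra_def)

lemma L1: assumes "u \<in> A.span G" "\<forall>g\<in>G. br g y \<in> S" "A.subspace S"
  shows "br u y \<in> S"
  using assms(1)
proof (induct rule: A.span_induct_alt)
  case base then show ?case using assms(3) by (simp add: A.subspace_0)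
next
  case (step c x y') then show ?case using assms
    by (simp add: br_add1 br_sc1 A.subspace_add A.subspace_scale)
qed

lemma L2: assumes "u \<in> A.span G" "\<forall>g\<in>G. br y g \<in> S" "A.subspace S"
  shows "br y u \<in> S"
proof -
  have "br u y \<in> S" using L1[OF assms(1) _ assms(3)] assms(2) assms(3)
    by (metis br_anti A.subspace_neg)
  then show ?thesis by (metis br_anti A.subspace_neg assms(3))
qed

lemma der_Fit: "br x y \<in> Fit sc br"
proof -
  let ?G = "{br p q | p q. True}"
  let ?D = "A.span ?G"
  have id: "lie_ideal sc br ?D"
    unfolding lie_ideal_def
  proof (intro conjI ballI allI)
    show "A.subspace ?D" by simp
    fix u a assume "u \<in> ?D"
    then show "br u a \<in> ?D" by (rule L1) (auto intro: A.span_base)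
  qed
  have z: "br u v = 0" if "u \<in> ?D" "v \<in> ?D" for u v
  proof -
    have "br u v \<in> {0}"
    proof (rule L1[OF that(1)])
      show "\<forall>g\<in>?G. br g v \<in> {0}"
      proof
        fix g assume "g \<in> ?G"
        then obtain p q where g: "g = br p q" by blast
        show "br g v \<in> {0}" unfolding g by (rule L2[OF that(2)]) (auto simp: metab)
      qed
    qed simp
    then show ?thesis by simp
  qed
  have "lower_central sc br ?D (Suc 0) \<subseteq> {0}"
    using z by (simp only: lower_central.simps, intro A.span_minimal) auto
  then have "nilpotent_ideal sc br ?D" using id unfolding nilpotent_ideal_def by blast
  then have "?D \<subseteq> Fit sc br" by (rule nilp_Fit)
  moreover have "br x y \<in> ?D" by (rule A.span_base) blast
  ultimately show ?thesis by blast
qed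


lemma QB: "quot_basis sc (Fit sc br) z" using U by (simp add: U_algebra_def)

lemma sum_ext: assumes "finite S" "{\<alpha>. c \<alpha> \<noteq> 0} \<subseteq> S"
  shows "(\<Sum>\<alpha>\<in>{\<alpha>. c \<alpha> \<noteq> 0}. sc (c \<alpha>) (z \<alpha>)) = (\<Sum>\<alpha>\<in>S. sc (c \<alpha>) (z \<alpha>))"
  by (rule sum.mono_neutral_left) (use assms in auto)

lemma ZU: assumes f1: "finite {\<alpha>. c1 \<alpha> \<noteq> 0}" and h1: "a - (\<Sum>\<alpha>\<in>{\<alpha>. c1 \<alpha> \<noteq> 0}. sc (c1 \<alpha>) (z \<alpha>)) \<in> Fit sc br"
  and f2: "finite {\<alpha>. c2 \<alpha> \<noteq> 0}" and h2: "a - (\<Sum>\<alpha>\<in>{\<alpha>. c2 \<alpha> \<noteq> 0}. sc (c2 \<alpha>) (z \<alpha>)) \<in> Fit sc br"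
  shows "c1 = c2"
proof -
  let ?S = "{\<alpha>. c1 \<alpha> \<noteq> 0} \<union> {\<alpha>. c2 \<alpha> \<noteq> 0}"
  have fS: "finite ?S" using f1 f2 by simp
  define d where "d = (\<lambda>\<alpha>. c2 \<alpha> - c1 \<alpha>)"
  have dS: "{\<alpha>. d \<alpha> \<noteq> 0} \<subseteq> ?S" by (auto simp: d_def)
  have fd: "finite {\<alpha>. d \<alpha> \<noteq> 0}" using fS dS finite_subset by blast
  have "(a - (\<Sum>\<alpha>\<in>{\<alpha>. c1 \<alpha> \<noteq> 0}. sc (c1 \<alpha>) (z \<alpha>))) - (a - (\<Sum>\<alpha>\<in>{\<alpha>. c2 \<alpha> \<noteq> 0}. sc (c2 \<alpha>) (z \<alpha>))) \<in> Fit sc br"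
    using h1 h2 Fit_sub A.subspace_diff by blast
  also have "(a - (\<Sum>\<alpha>\<in>{\<alpha>. c1 \<alpha> \<noteq> 0}. sc (c1 \<alpha>) (z \<alpha>))) - (a - (\<Sum>\<alpha>\<in>{\<alpha>. c2 \<alpha> \<noteq> 0}. sc (c2 \<alpha>) (z \<alpha>)))
     = (\<Sum>\<alpha>\<in>?S. sc (c2 \<alpha>) (z \<alpha>)) - (\<Sum>\<alpha>\<in>?S. sc (c1 \<alpha>) (z \<alpha>))"
    using sum_ext[OF fS, of c1] sum_ext[OF fS, of c2] by auto
  also have "\<dots> = (\<Sum>\<alpha>\<in>?S. sc (d \<alpha>) (z \<alpha>))"
    by (simp add: d_def A.scale_left_diff_distrib sum_subtractf)
  also have "\<dots> = (\<Sum>\<alpha>\<in>{\<alpha>. d \<alpha> \<noteq> 0}. sc (d \<alpha>) (z \<alpha>))"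
    using sum_ext[OF fS dS] by simp
  finally have "\<forall>\<alpha>. d \<alpha> = 0" using QB fd unfolding quot_basis_def by blast
  then show ?thesis by (auto simp: d_def)
qed

lemma ZC: "finite {\<alpha>. zcoords sc br z a \<alpha> \<noteq> 0} \<and>
   a - (\<Sum>\<alpha>\<in>{\<alpha>. zcoords sc br z a \<alpha> \<noteq> 0}. sc (zcoords sc br z a \<alpha>) (z \<alpha>)) \<in> Fit sc br"
proof -
  obtain c f where "finite {\<alpha>. c \<alpha> \<noteq> 0}" "f \<in> Fit sc br"
    "a = (\<Sum>\<alpha>\<in>{\<alpha>. c \<alpha> \<noteq> 0}. sc (c \<alpha>) (z \<alpha>)) + f"
    using QB unfolding quot_basis_def by blast
  then have ex: "finite {\<alpha>. c \<alpha> \<noteq> 0} \<and> a - (\<Sum>\<alpha>\<in>{\<alpha>. c \<alpha> \<noteq> 0}. sc (c \<alpha>) (z \<alpha>)) \<in> Fit sc br"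
    by simp
  show ?thesis unfolding zcoords_def
    by (rule theI[of _ c]) (use ex ZU in blast)+
qed

lemma ZC_eq: assumes "finite {\<alpha>. c \<alpha> \<noteq> 0}" "a - (\<Sum>\<alpha>\<in>{\<alpha>. c \<alpha> \<noteq> 0}. sc (c \<alpha>) (z \<alpha>)) \<in> Fit sc br"
  shows "zcoords sc br z a = c"
  using ZU[OF conjunct1[OF ZC] conjunct2[OF ZC] assms] .

lemma ZC_Fit: "b \<in> Fit sc br \<Longrightarrow> zcoords sc br z b = (\<lambda>_. 0)"
  by (rule ZC_eq) auto

lemma ZC_z: "zcoords sc br z (z \<alpha>) = (\<lambda>\<beta>. if \<beta> = \<alpha> then 1 else 0)"
proof (rule ZC_eq)
  have e: "{\<beta>. (if \<beta> = \<alpha> then (1::'k) else 0) \<noteq> 0} = {\<alpha>}" by auto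
  show "finite {\<beta>. (if \<beta> = \<alpha> then (1::'k) else 0) \<noteq> 0}" unfolding e by simp
  show "z \<alpha> - (\<Sum>\<beta>\<in>{\<beta>. (if \<beta> = \<alpha> then (1::'k) else 0) \<noteq> 0}. sc (if \<beta> = \<alpha> then 1 else 0) (z \<beta>)) \<in> Fit sc br"
    unfolding e using Fit_sub by (simp add: A.subspace_0)
qed


lemma single1_inj: "Poly_Mapping.single (\<alpha>::'l) (1::nat) = Poly_Mapping.single \<beta> 1 \<longleftrightarrow> \<alpha> = \<beta>"
proof
  assume "Poly_Mapping.single \<alpha> (1::nat) = Poly_Mapping.single \<beta> 1"
  then have "Poly_Mapping.lookup (Poly_Mapping.single \<alpha> (1::nat)) \<alpha> = Poly_Mapping.lookup (Poly_Mapping.single \<beta> 1) \<alpha>" by simp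
  then show "\<alpha> = \<beta>" by (auto simp: lookup_single when_def split: if_splits)
qed simp

lemma count_zero: "(\<forall>\<beta>. count_list xs \<beta> = 0) \<Longrightarrow> xs = []"
  by (metis count_list_0_iff list.set_intros(1) neq_Nil_conv)

lemma single1_inj': "Poly_Mapping.single (\<alpha>::'l) (Suc 0) = Poly_Mapping.single \<beta> (Suc 0) \<longleftrightarrow> \<alpha> = \<beta>"
  using single1_inj by simp

lemma count_single: "(\<forall>\<beta>. count_list xs \<beta> = (if \<beta> = \<alpha> then 1 else 0)) \<Longrightarrow> xs = [\<alpha>]"
proof (cases xs)
  case Nil
  assume "\<forall>\<beta>. count_list xs \<beta> = (if \<beta> = \<alpha> then 1 else 0)"
  then show ?thesis using Nil by (metis count_list.simps(1) zero_neq_one)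
next
  case (Cons y ys)
  assume h: "\<forall>\<beta>. count_list xs \<beta> = (if \<beta> = \<alpha> then 1 else 0)"
  have y: "y = \<alpha>" using h[rule_format, of y] Cons by (auto split: if_splits)
  have "\<forall>\<beta>. count_list ys \<beta> = 0" using h Cons y by (auto split: if_splits)
  then show ?thesis using Cons y count_zero by blast
qed

lemma mono_act_0: "mono_act T 0 b = b"
  unfolding mono_act_def
proof (rule the_equality)
  show "\<forall>xs. (\<forall>\<alpha>. count_list xs \<alpha> = Poly_Mapping.lookup 0 \<alpha>) \<longrightarrow> fold T xs b = b"
    using count_zero by fastforce
  fix y assume "\<forall>xs. (\<forall>\<alpha>. count_list xs \<alpha> = Poly_Mapping.lookup 0 \<alpha>) \<longrightarrow> fold T xs b = y"
  then show "y = b" by (metis count_list.simps(1) fold_Nil id_apply lookup_zero)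
qed

lemma mono_act_single: "mono_act T (Poly_Mapping.single \<alpha> 1) b = T \<alpha> b"
  unfolding mono_act_def
proof (rule the_equality)
  have e: "Poly_Mapping.lookup (Poly_Mapping.single \<alpha> (1::nat)) \<beta> = (if \<beta> = \<alpha> then 1 else 0)" for \<beta>
    by (auto simp: lookup_single when_def)
  show "\<forall>xs. (\<forall>\<beta>. count_list xs \<beta> = Poly_Mapping.lookup (Poly_Mapping.single \<alpha> 1) \<beta>) \<longrightarrow> fold T xs b = T \<alpha> b"
    unfolding e using count_single by fastforce
  fix y assume h: "\<forall>xs. (\<forall>\<beta>. count_list xs \<beta> = Poly_Mapping.lookup (Poly_Mapping.single \<alpha> 1) \<beta>) \<longrightarrow> fold T xs b = y"
  have "\<forall>\<beta>. count_list [\<alpha>] \<beta> = Poly_Mapping.lookup (Poly_Mapping.single \<alpha> 1) \<beta>" unfolding e by simp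
  with h have "fold T [\<alpha>] b = y" by blast
  then show "y = T \<alpha> b" by simp
qed

lemma poly_act_sup: assumes "finite K" "Poly_Mapping.keys p \<subseteq> K"
  shows "poly_act sc T p b = (\<Sum>\<nu>\<in>K. sc (Poly_Mapping.lookup p \<nu>) (mono_act T \<nu> b))"
  unfolding poly_act_def
  by (rule sum.mono_neutral_left) (use assms in \<open>auto simp: in_keys_iff\<close>)

lemma FA0: "fit_act sc br z (const_poly r) b = sc r b"
proof (cases "r = 0")
  case True then show ?thesis by (simp add: fit_act_def poly_act_def const_poly_def)
next
  case False then show ?thesis
    by (simp add: fit_act_def poly_act_def const_poly_def mono_act_0)
qed

lemma FA1: assumes "finite S"
  shows "fit_act sc br z (\<Sum>\<alpha>\<in>S. Poly_Mapping.single (Poly_Mapping.single \<alpha> 1) (c \<alpha>)) b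
       = (\<Sum>\<alpha>\<in>S. sc (c \<alpha>) (br b (z \<alpha>)))"
proof -
  define p where "p = (\<Sum>\<alpha>\<in>S. Poly_Mapping.single (Poly_Mapping.single \<alpha> (1::nat)) (c \<alpha>))"
  let ?K = "(\<lambda>\<alpha>. Poly_Mapping.single \<alpha> (1::nat)) ` S"
  have lk: "Poly_Mapping.lookup p \<nu> = (\<Sum>\<beta>\<in>S. (c \<beta> when Poly_Mapping.single \<beta> 1 = \<nu>))" for \<nu>
    by (simp add: p_def lookup_sum lookup_single)
  have kK: "Poly_Mapping.keys p \<subseteq> ?K"
  proof
    fix \<nu> assume "\<nu> \<in> Poly_Mapping.keys p"
    then have "(\<Sum>\<beta>\<in>S. (c \<beta> when Poly_Mapping.single \<beta> 1 = \<nu>)) \<noteq> 0" by (simp add: in_keys_iff lk)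
    then obtain \<beta> where "\<beta> \<in> S" "(c \<beta> when Poly_Mapping.single \<beta> 1 = \<nu>) \<noteq> 0"
      by (meson sum.neutral)
    then show "\<nu> \<in> ?K" by (auto simp: when_def split: if_splits)
  qed
  have lk2: "Poly_Mapping.lookup p (Poly_Mapping.single \<alpha> 1) = c \<alpha>" if "\<alpha> \<in> S" for \<alpha>
  proof -
    have "Poly_Mapping.lookup p (Poly_Mapping.single \<alpha> 1) = (\<Sum>\<beta>\<in>S. (if \<beta> = \<alpha> then c \<beta> else 0))"
      unfolding lk by (rule sum.cong) (auto simp: when_def single1_inj single1_inj')
    also have "\<dots> = c \<alpha>" using that assms by simp
    finally show ?thesis .
  qed
  have inj: "inj_on (\<lambda>\<alpha>. Poly_Mapping.single \<alpha> (1::nat)) S"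
    by (auto simp: inj_on_def single1_inj single1_inj')
  have "fit_act sc br z p b = (\<Sum>\<nu>\<in>?K. sc (Poly_Mapping.lookup p \<nu>) (mono_act (\<lambda>\<alpha> b. br b (z \<alpha>)) \<nu> b))"
    unfolding fit_act_def by (rule poly_act_sup) (use assms kK in auto)
  also have "\<dots> = (\<Sum>\<alpha>\<in>S. sc (Poly_Mapping.lookup p (Poly_Mapping.single \<alpha> 1)) (mono_act (\<lambda>\<alpha> b. br b (z \<alpha>)) (Poly_Mapping.single \<alpha> 1) b))"
    by (rule sum.reindex[OF inj, unfolded comp_def])
  also have "\<dots> = (\<Sum>\<alpha>\<in>S. sc (c \<alpha>) (br b (z \<alpha>)))"
  proof (rule sum.cong)
    fix \<alpha> assume "\<alpha> \<in> S"
    then show "sc (Poly_Mapping.lookup p (Poly_Mapping.single \<alpha> 1)) (mono_act (\<lambda>\<alpha> b. br b (z \<alpha>)) (Poly_Mapping.single \<alpha> 1) b) = sc (c \<alpha>) (br b (z \<alpha>))"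
      by (simp only: lk2 mono_act_single)
  qed simp
  finally show ?thesis unfolding p_def .
qed


lemma zpoly_act: "fit_act sc br z (\<Sum>\<alpha>\<in>{\<alpha>. zcoords sc br z b \<alpha> \<noteq> 0}.
            Poly_Mapping.single (Poly_Mapping.single \<alpha> 1) (zcoords sc br z b \<alpha>)) u
    = br u (\<Sum>\<alpha>\<in>{\<alpha>. zcoords sc br z b \<alpha> \<noteq> 0}. sc (zcoords sc br z b \<alpha>) (z \<alpha>))"
proof -
  have "finite {\<alpha>. zcoords sc br z b \<alpha> \<noteq> 0}" using ZC[of b] by blast
  then show ?thesis by (simp only: FA1 br_sum2 br_sc2)
qed

lemma br_zsum: assumes "u \<in> Fit sc br"
  shows "br u (\<Sum>\<alpha>\<in>{\<alpha>. zcoords sc br z b \<alpha> \<noteq> 0}. sc (zcoords sc br z b \<alpha>) (z \<alpha>)) = br u b"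
proof -
  let ?s = "(\<Sum>\<alpha>\<in>{\<alpha>. zcoords sc br z b \<alpha> \<noteq> 0}. sc (zcoords sc br z b \<alpha>) (z \<alpha>))"
  have f: "b - ?s \<in> Fit sc br" using ZC[of b] by blast
  have "br u ?s = br u (b - (b - ?s))" by simp
  also have "\<dots> = br u b - br u (b - ?s)" by (rule br_diff2)
  also have "\<dots> = br u b" using Fit_ab[OF assms f] by simp
  finally show ?thesis .
qed

lemma HomR_add: "\<psi> \<in> Hom_R sc br z act \<Longrightarrow> additive \<psi>"
  by standard (simp add: Hom_R_def)

lemma HomR_mod: assumes "\<psi> \<in> Hom_R sc br z act"
  shows "\<psi> (mod_br sc br z act m b) = br (\<psi> m) b"
proof -
  have "\<psi> m \<in> Fit sc br" using assms by (simp add: Hom_R_def)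
  moreover have "\<psi> (act p m) = fit_act sc br z p (\<psi> m)" for p using assms by (simp add: Hom_R_def)
  ultimately show ?thesis unfolding mod_br_def
    by (simp only: zpoly_act br_zsum)
qed

lemma surj_part: assumes h: "\<psi> \<in> Hom_R sc br z act"
  shows "(\<lambda>x. fst x + \<psi> (snd x)) \<in> Hom_A sc br z act"
proof -
  interpret P: additive \<psi> by (rule HomR_add[OF h])
  have F: "\<psi> m \<in> Fit sc br" for m using h by (simp add: Hom_R_def)
  have act: "\<psi> (act p m) = fit_act sc br z p (\<psi> m)" for p m using h by (simp add: Hom_R_def)
  show ?thesis unfolding Hom_A_def
  proof (intro CollectI conjI allI)
    fix x y :: "'a \<times> 'm"
    show "fst (x + y) + \<psi> (snd (x + y)) = fst x + \<psi> (snd x) + (fst y + \<psi> (snd y))"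
      by (simp add: P.add algebra_simps)
  next
    fix r and x :: "'a \<times> 'm"
    show "fst (ext_sc sc act r x) + \<psi> (snd (ext_sc sc act r x)) = sc r (fst x + \<psi> (snd x))"
      by (simp add: ext_sc_def act FA0 A.scale_right_distrib)
  next
    fix x y :: "'a \<times> 'm"
    obtain a m where x: "x = (a, m)" by (cases x)
    obtain b n where y: "y = (b, n)" by (cases y)
    have "br (a + \<psi> m) (b + \<psi> n) = br a b + br a (\<psi> n) + br (\<psi> m) b + br (\<psi> m) (\<psi> n)"
      by (simp add: br_add1 br_add2 algebra_simps)
    also have "\<dots> = br a b + br (\<psi> m) b - br (\<psi> n) a"
      using Fit_ab[OF F F] br_anti[of a "\<psi> n"] by simp
    finally show "fst (ext_br sc br z act x y) + \<psi> (snd (ext_br sc br z act x y)) =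
         br (fst x + \<psi> (snd x)) (fst y + \<psi> (snd y))"
      by (simp add: x y ext_br_def P.diff HomR_mod[OF h])
  next
    fix a show "fst (a, 0::'m) + \<psi> (snd (a, 0::'m)) = a" by (simp add: P.zero)
  qed
qed


lemma count_rep: "count_list (replicate n a) b = (if a = b then n else 0)"
  by (induct n) auto

lemma ex_xs_gen: "finite K \<Longrightarrow> \<exists>xs. \<forall>\<alpha>. count_list xs \<alpha> = (if \<alpha> \<in> K then f \<alpha> else 0)"
proof (induct K rule: finite_induct)
  case empty then show ?case by (intro exI[of _ "[]"]) simp
next
  case (insert a K)
  then obtain xs where xs: "\<forall>\<alpha>. count_list xs \<alpha> = (if \<alpha> \<in> K then f \<alpha> else 0)" by blast
  show ?case
    by (rule exI[of _ "replicate (f a) a @ xs"]) (use xs insert(2) in \<open>auto simp: count_rep\<close>)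
qed

lemma ex_xs: "\<exists>xs. \<forall>\<alpha>. count_list xs \<alpha> = Poly_Mapping.lookup (\<mu>::'l \<Rightarrow>\<^sub>0 nat) \<alpha>"
proof -
  obtain xs where "\<forall>\<alpha>. count_list xs \<alpha> = (if \<alpha> \<in> Poly_Mapping.keys \<mu> then Poly_Mapping.lookup \<mu> \<alpha> else 0)"
    using ex_xs_gen[of "Poly_Mapping.keys \<mu>" "Poly_Mapping.lookup \<mu>"] by auto
  then show ?thesis by (metis in_keys_iff)
qed

definition mon :: "'l list \<Rightarrow> ('l \<Rightarrow>\<^sub>0 nat)" where
  "mon xs = sum_list (map (\<lambda>\<alpha>. Poly_Mapping.single \<alpha> 1) xs)"

lemma lookup_mon: "Poly_Mapping.lookup (mon xs) \<beta> = count_list xs \<beta>"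
  by (induct xs) (auto simp: mon_def lookup_add lookup_single when_def)

lemma mon_eq: "\<forall>\<alpha>. count_list xs \<alpha> = Poly_Mapping.lookup \<mu> \<alpha> \<Longrightarrow> mon xs = \<mu>"
  by (rule poly_mapping_eqI) (simp add: lookup_mon)

lemma lookup_lin: assumes "finite (S::'l set)" "\<alpha> \<in> S"
  shows "Poly_Mapping.lookup (\<Sum>\<beta>\<in>S. Poly_Mapping.single (Poly_Mapping.single \<beta> (1::nat)) (c \<beta>)) (Poly_Mapping.single \<alpha> 1) = c \<alpha>"
proof -
  have "Poly_Mapping.lookup (\<Sum>\<beta>\<in>S. Poly_Mapping.single (Poly_Mapping.single \<beta> (1::nat)) (c \<beta>)) (Poly_Mapping.single \<alpha> 1) = (\<Sum>\<beta>\<in>S. (if \<beta> = \<alpha> then c \<beta> else 0))"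
    unfolding lookup_sum lookup_single by (rule sum.cong) (auto simp: when_def dest: iffD1[OF single1_inj'] iffD1[OF single1_inj])
  also have "\<dots> = c \<alpha>" using assms by simp
  finally show ?thesis .
qed

lemma poly_expand: "p = (\<Sum>\<mu>\<in>Poly_Mapping.keys p. Poly_Mapping.single \<mu> (Poly_Mapping.lookup p \<mu>))"
proof (rule poly_mapping_eqI)
  fix \<nu>
  have "Poly_Mapping.lookup (\<Sum>\<mu>\<in>Poly_Mapping.keys p. Poly_Mapping.single \<mu> (Poly_Mapping.lookup p \<mu>)) \<nu>
     = (\<Sum>\<mu>\<in>Poly_Mapping.keys p. (if \<mu> = \<nu> then Poly_Mapping.lookup p \<mu> else 0))"
    unfolding lookup_sum lookup_single by (rule sum.cong) (auto simp: when_def)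
  also have "\<dots> = Poly_Mapping.lookup p \<nu>" by (auto simp: in_keys_iff)
  finally show "Poly_Mapping.lookup p \<nu> = Poly_Mapping.lookup (\<Sum>\<mu>\<in>Poly_Mapping.keys p. Poly_Mapping.single \<mu> (Poly_Mapping.lookup p \<mu>)) \<nu>" by simp
qed


context
  fixes \<phi> assumes H: "\<phi> \<in> Hom_A sc br z act"
begin

lemma HA_all: "(\<forall>x y. \<phi> (x + y) = \<phi> x + \<phi> y)
    \<and> (\<forall>r x. \<phi> (ext_sc sc act r x) = sc r (\<phi> x))
    \<and> (\<forall>x y. \<phi> (ext_br sc br z act x y) = br (\<phi> x) (\<phi> y))
    \<and> (\<forall>a. \<phi> (a, 0) = a)" using H unfolding Hom_A_def mem_Collect_eq .
lemma HA_add: "additive \<phi>" by standard (use HA_all in blast)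
lemma HA_sc: "\<phi> (ext_sc sc act r x) = sc r (\<phi> x)" using HA_all by blast
lemma HA_br: "\<phi> (ext_br sc br z act x y) = br (\<phi> x) (\<phi> y)" using HA_all by blast
lemma HA_id: "\<phi> (a, 0) = a" using HA_all by blast

lemma HA_decomp: "\<phi> (a, m) = a + \<phi> (0, m)"
proof -
  have "\<phi> (a, m) = \<phi> ((a, 0) + (0, m))" by simp
  also have "\<dots> = a + \<phi> (0, m)" by (subst additive.add[OF HA_add]) (simp add: HA_id)
  finally show ?thesis .
qed

lemma HA_padd: "additive (\<lambda>m. \<phi> (0, m))"
proof
  fix m n :: 'm
  have "\<phi> (0, m + n) = \<phi> ((0, m) + (0, n))" by simp
  then show "\<phi> (0, m + n) = \<phi> (0, m) + \<phi> (0, n)" by (simp only: additive.add[OF HA_add])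
qed

lemma HA_const: "\<phi> (0, act (const_poly r) m) = sc r (\<phi> (0, m))"
  using HA_sc[of r "(0, m)"] by (simp add: ext_sc_def)

lemma mod_br_0: "mod_br sc br z act 0 a = 0"
  by (simp add: mod_br_def)

lemma mod_br_Fit: "b \<in> Fit sc br \<Longrightarrow> mod_br sc br z act m b = 0"
  by (simp add: mod_br_def ZC_Fit)

lemma mod_br_z: "mod_br sc br z act m (z \<alpha>) = act (var_poly \<alpha>) m"
proof -
  have e: "{\<beta>. (if \<beta> = \<alpha> then (1::'k) else 0) \<noteq> 0} = {\<alpha>}" by auto
  show ?thesis unfolding mod_br_def ZC_z e by (simp add: var_poly_def)
qed

lemma HA_var: "\<phi> (0, act (var_poly \<alpha>) m) = br (\<phi> (0, m)) (z \<alpha>)"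
  using HA_br[of "(0, m)" "(z \<alpha>, 0)"] by (simp add: ext_br_def mod_br_z mod_br_0 HA_id)

lemma HA_ann: "b \<in> Fit sc br \<Longrightarrow> br (\<phi> (0, m)) b = 0"
  using HA_br[of "(0, m)" "(b, 0)"] by (simp add: ext_br_def mod_br_Fit mod_br_0 HA_id)

lemma HA_fit: "\<phi> (0, m) \<in> Fit sc br"
proof (rule ccontr)
  let ?u = "\<phi> (0, m)"
  assume nf: "?u \<notin> Fit sc br"
  obtain c f where fc: "finite {\<alpha>. c \<alpha> \<noteq> 0}" and fF: "f \<in> Fit sc br"
    and u: "?u = (\<Sum>\<alpha>\<in>{\<alpha>. c \<alpha> \<noteq> 0}. sc (c \<alpha>) (z \<alpha>)) + f"
    using QB unfolding quot_basis_def by blast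
  let ?S = "{\<alpha>. c \<alpha> \<noteq> 0}"
  have "?S \<noteq> {}"
  proof
    assume "?S = {}"
    then have "?u = f" using u by simp
    then show False using nf fF by simp
  qed
  then obtain \<alpha> where a: "\<alpha> \<in> ?S" by blast
  define p where "p = (\<Sum>\<beta>\<in>?S. Poly_Mapping.single (Poly_Mapping.single \<beta> (1::nat)) (c \<beta>))"
  have "Poly_Mapping.lookup p (Poly_Mapping.single \<alpha> 1) = c \<alpha>"
    unfolding p_def by (rule lookup_lin[OF fc a])
  then have pnz: "p \<noteq> 0" using a by auto
  have allz: "b = 0" if b: "b \<in> Fit sc br" for b
  proof -
    have "fit_act sc br z p b = (\<Sum>\<beta>\<in>?S. sc (c \<beta>) (br b (z \<beta>)))"
      unfolding p_def by (rule FA1[OF fc])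
    also have "\<dots> = br b (\<Sum>\<beta>\<in>?S. sc (c \<beta>) (z \<beta>))" by (simp add: br_sum2 br_sc2)
    also have "\<dots> = br b (?u - f)" using u by simp
    also have "\<dots> = br b ?u - br b f" by (rule br_diff2)
    also have "\<dots> = 0" using Fit_ab[OF b fF] HA_ann[OF b] br_anti[of b ?u] by simp
    finally have "fit_act sc br z p b = 0" .
    then show "b = 0" using U b pnz by (auto simp: U_algebra_def)
  qed
  have brz: "br x y = 0" for x y using allz[OF der_Fit] .
  have "lie_ideal sc br UNIV" by (simp add: lie_ideal_def)
  moreover have "lower_central sc br UNIV (Suc 0) \<subseteq> {0}"
    by (simp only: lower_central.simps, intro A.span_minimal) (auto simp: brz)
  ultimately have "nilpotent_ideal sc br UNIV" unfolding nilpotent_ideal_def by blast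
  then have "UNIV \<subseteq> Fit sc br" by (rule nilp_Fit)
  then show False using nf by blast
qed

lemma HA_fold: "fold (\<lambda>\<alpha> b. br b (z \<alpha>)) xs (\<phi> (0, m)) = \<phi> (0, act (Poly_Mapping.single (mon xs) 1) m)"
proof (induct xs arbitrary: m)
  case Nil then show ?case by (simp add: mon_def)
next
  case (Cons \<alpha> xs)
  have "fold (\<lambda>\<alpha> b. br b (z \<alpha>)) (\<alpha> # xs) (\<phi> (0, m)) = fold (\<lambda>\<alpha> b. br b (z \<alpha>)) xs (\<phi> (0, act (var_poly \<alpha>) m))"
    by (simp add: HA_var)
  also have "\<dots> = \<phi> (0, act (Poly_Mapping.single (mon xs) 1) (act (var_poly \<alpha>) m))" by (rule Cons)
  also have "\<dots> = \<phi> (0, act (Poly_Mapping.single (mon (\<alpha> # xs)) 1) m)"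
  proof -
    have "act (Poly_Mapping.single (mon xs) 1) (act (var_poly \<alpha>) m) = act (Poly_Mapping.single (mon xs) 1 * var_poly \<alpha>) m"
      by (rule M.scale_scale)
    moreover have "mon (\<alpha> # xs) = Poly_Mapping.single \<alpha> 1 + mon xs" by (simp add: mon_def)
    moreover have "Poly_Mapping.single (mon xs) 1 * var_poly \<alpha> = Poly_Mapping.single (mon xs + Poly_Mapping.single \<alpha> 1) (1::'k)"
      by (simp add: var_poly_def mult_single)
    ultimately show ?thesis by (simp only: add.commute)
  qed
  finally show ?case .
qed

lemma HA_mono: "mono_act (\<lambda>\<alpha> b. br b (z \<alpha>)) \<mu> (\<phi> (0, m)) = \<phi> (0, act (Poly_Mapping.single \<mu> 1) m)"
  unfolding mono_act_def
proof (rule the_equality)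
  show "\<forall>xs. (\<forall>\<alpha>. count_list xs \<alpha> = Poly_Mapping.lookup \<mu> \<alpha>) \<longrightarrow>
      fold (\<lambda>\<alpha> b. br b (z \<alpha>)) xs (\<phi> (0, m)) = \<phi> (0, act (Poly_Mapping.single \<mu> 1) m)"
    using HA_fold mon_eq by metis
  fix y assume h: "\<forall>xs. (\<forall>\<alpha>. count_list xs \<alpha> = Poly_Mapping.lookup \<mu> \<alpha>) \<longrightarrow>
      fold (\<lambda>\<alpha> b. br b (z \<alpha>)) xs (\<phi> (0, m)) = y"
  obtain xs where xs: "\<forall>\<alpha>. count_list xs \<alpha> = Poly_Mapping.lookup \<mu> \<alpha>" using ex_xs by blast
  then show "y = \<phi> (0, act (Poly_Mapping.single \<mu> 1) m)"
    using h HA_fold mon_eq by metis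
qed

lemma HA_act: "\<phi> (0, act p m) = fit_act sc br z p (\<phi> (0, m))"
proof -
  interpret P: additive "\<lambda>m. \<phi> (0, m)" by (rule HA_padd)
  have s: "Poly_Mapping.single (\<mu>::'l \<Rightarrow>\<^sub>0 nat) (c::'k) = const_poly c * Poly_Mapping.single \<mu> 1" for \<mu> c
    by (simp add: const_poly_def mult_single)
  have "\<phi> (0, act p m) = \<phi> (0, act (\<Sum>\<mu>\<in>Poly_Mapping.keys p. Poly_Mapping.single \<mu> (Poly_Mapping.lookup p \<mu>)) m)"
    by (subst poly_expand[of p]) (rule refl)
  also have "\<dots> = (\<Sum>\<mu>\<in>Poly_Mapping.keys p. \<phi> (0, act (Poly_Mapping.single \<mu> (Poly_Mapping.lookup p \<mu>)) m))"
    by (simp only: M.scale_sum_left P.sum)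
  also have "\<dots> = (\<Sum>\<mu>\<in>Poly_Mapping.keys p. sc (Poly_Mapping.lookup p \<mu>) (mono_act (\<lambda>\<alpha> b. br b (z \<alpha>)) \<mu> (\<phi> (0, m))))"
  proof (rule sum.cong)
    fix \<mu> assume "\<mu> \<in> Poly_Mapping.keys p"
    have "act (Poly_Mapping.single \<mu> (Poly_Mapping.lookup p \<mu>)) m = act (const_poly (Poly_Mapping.lookup p \<mu>)) (act (Poly_Mapping.single \<mu> 1) m)"
      by (subst s) (rule M.scale_scale[symmetric])
    then show "\<phi> (0, act (Poly_Mapping.single \<mu> (Poly_Mapping.lookup p \<mu>)) m) = sc (Poly_Mapping.lookup p \<mu>) (mono_act (\<lambda>\<alpha> b. br b (z \<alpha>)) \<mu> (\<phi> (0, m)))"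
      by (simp only: HA_const HA_mono)
  qed simp
  also have "\<dots> = fit_act sc br z p (\<phi> (0, m))" by (simp add: fit_act_def poly_act_def)
  finally show ?thesis .
qed

end

end

theorem lemma4p3p7:
  fixes sc :: "'k::field \<Rightarrow> 'a::ab_group_add \<Rightarrow> 'a"
    and br :: "'a \<Rightarrow> 'a \<Rightarrow> 'a"
    and z :: "'l \<Rightarrow> 'a"
    and act :: "('l, 'k) mpoly \<Rightarrow> 'm::ab_group_add \<Rightarrow> 'm"
  assumes "U_algebra sc br z"
    and "module act"
    and "torsion_free act"
  shows "(\<forall>\<phi>\<in>Hom_A sc br z act.
            (\<forall>m. \<phi> (0, m) \<in> Fit sc br) \<and> (\<lambda>m. \<phi> (0, m)) \<in> Hom_R sc br z act)
       \<and> bij_betw (\<lambda>\<phi> m. \<phi> (0, m)) (Hom_A sc br z act) (Hom_R sc br z act)"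
proof -
  have ms: "module sc" using assms(1) by (simp add: U_algebra_def lie_algebra_def)
  interpret ualg sc act br z by (intro ualg.intro ualg_axioms.intro ms assms(1,2))
  have P1: "(\<forall>m. \<phi> (0, m) \<in> Fit sc br) \<and> (\<lambda>m. \<phi> (0, m)) \<in> Hom_R sc br z act"
    if H: "\<phi> \<in> Hom_A sc br z act" for \<phi>
    using HA_fit[OF H] additive.add[OF HA_padd[OF H]] HA_act[OF H] by (simp add: Hom_R_def)
  have inj: "inj_on (\<lambda>\<phi> m. \<phi> (0, m)) (Hom_A sc br z act)"
  proof (rule inj_onI)
    fix \<phi>1 \<phi>2 assume h1: "\<phi>1 \<in> Hom_A sc br z act" and h2: "\<phi>2 \<in> Hom_A sc br z act"
      and e: "(\<lambda>m. \<phi>1 (0, m)) = (\<lambda>m. \<phi>2 (0, m))"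
    show "\<phi>1 = \<phi>2"
    proof
      fix x :: "'a \<times> 'm"
      obtain a m where x: "x = (a, m)" by (cases x)
      have "\<phi>1 (0, m) = \<phi>2 (0, m)" using fun_cong[OF e, of m] by simp
      moreover have "\<phi>1 (a, m) = a + \<phi>1 (0, m)" by (rule HA_decomp[OF h1])
      moreover have "\<phi>2 (a, m) = a + \<phi>2 (0, m)" by (rule HA_decomp[OF h2])
      ultimately show "\<phi>1 x = \<phi>2 x" unfolding x by simp
    qed
  qed
  have img: "(\<lambda>\<phi> m. \<phi> (0, m)) ` Hom_A sc br z act = Hom_R sc br z act"
  proof
    show "(\<lambda>\<phi> m. \<phi> (0, m)) ` Hom_A sc br z act \<subseteq> Hom_R sc br z act" using P1 by blast
  next
    show "Hom_R sc br z act \<subseteq> (\<lambda>\<phi> m. \<phi> (0, m)) ` Hom_A sc br z act"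
    proof
      fix \<psi> assume h: "\<psi> \<in> Hom_R sc br z act"
      have "\<psi> = (\<lambda>m. (\<lambda>x. fst x + \<psi> (snd x)) (0, m))" by simp
      then show "\<psi> \<in> (\<lambda>\<phi> m. \<phi> (0, m)) ` Hom_A sc br z act"
        by (rule image_eqI[OF _ surj_part[OF h]])
    qed
  qed
  show ?thesis using P1 inj img by (simp add: bij_betw_def)
qed

end
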